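(* Let $(A,\diamond,\circ,\lambda)$ be a left semi-truss such that $(A,\diamond)$ is an inverse semigroup, let $\sigma(a,b)=a\circ(b\diamond b^\diamond)$, and assume that $\lambda(a,b)=\sigma(a,b)^\diamond\diamond(a\circ b)$ for all $a,b\in A$. Then for all $a,b,c\in A$ and every idempotent $e\in E(A,\diamond)$: (1) $\sigma(a,e\diamond b)=\sigma(a,e)\diamond\sigma(a,b)^\diamond\diamond\sigma(a,b)$; (2) $\sigma(a,e\diamond b)=\sigma(a,b)\diamond\sigma(a,e)^\diamond\diamond\sigma(a,e)$; (3) $\sigma(a,b)\diamond\sigma(a,c)^\diamond$ and $\sigma(a,c)\diamond\sigma(a,b)^\diamond$ are idempotents of $(A,\diamond)$ and are equal to each other; (4) $\sigma(a,b)\sim_l\sigma(a,c)$; (5) $\sigma(a,b^\diamond)\diamond(a\circ b)^\diamond=(a\circ b^\diamond)\diamond\sigma(a,b)^\diamond$; (6) $(a\circ b)^\diamond\diamond\sigma(a,b)=\sigma(a,b^\diamond)^\diamond\diamond(a\circ b^\diamond)$; (7) $\lambda(a,b^\diamond)=\lambda(a,b)^\diamond$; (8) $\lambda(a,e\diamond b)=\lambda(a,e)\diamond\lambda(a,b)$.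
   Context: An inverse semigroup is a semigroup $(A,\diamond)$ in which every $a$ has a unique $a^\diamond$ with $a\diamond a^\diamond\diamond a=a$ and $a^\diamond\diamond a\diamond a^\diamond=a^\diamond$. $E(A,\diamond)$ denotes the set of idempotents of $(A,\diamond)$. Two elements $x,y$ of an inverse semigroup satisfy the left compatibility relation $x\sim_l y$ if $x\diamond y^\diamond$ is an idempotent. A left semi-truss $(A,\diamond,\circ,\lambda)$ is a set $A$ with two associative binary operations $\diamond,\circ$ and a function $\lambda:A\times A\to A$ such that $a\circ(b\diamond c)=(a\circ b)\diamond\lambda(a,c)$ for all $a,b,c\in A$. *)

theory Defs
  imports Main
begin

definition is_semigroup :: "('a \<Rightarrow> 'a \<Rightarrow> 'a) \<Rightarrow> bool" where
  "is_semigroup d \<longleftrightarrow> (\<forall>a b c. d (d a b) c = d a (d b c))"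

definition inverse_semigroup :: "('a \<Rightarrow> 'a \<Rightarrow> 'a) \<Rightarrow> bool" where
  "inverse_semigroup d \<longleftrightarrow> is_semigroup d \<and>
     (\<forall>a. \<exists>!x. d (d a x) a = a \<and> d (d x a) x = x)"

definition sg_inv :: "('a \<Rightarrow> 'a \<Rightarrow> 'a) \<Rightarrow> 'a \<Rightarrow> 'a" where
  "sg_inv d a = (THE x. d (d a x) a = a \<and> d (d x a) x = x)"

definition idempotents :: "('a \<Rightarrow> 'a \<Rightarrow> 'a) \<Rightarrow> 'a set" where
  "idempotents d = {e. d e e = e}"

definition left_compatible :: "('a \<Rightarrow> 'a \<Rightarrow> 'a) \<Rightarrow> 'a \<Rightarrow> 'a \<Rightarrow> bool" where
  "left_compatible d x y \<longleftrightarrow> d x (sg_inv d y) \<in> idempotents d"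

definition left_semi_truss ::
  "('a \<Rightarrow> 'a \<Rightarrow> 'a) \<Rightarrow> ('a \<Rightarrow> 'a \<Rightarrow> 'a) \<Rightarrow> ('a \<Rightarrow> 'a \<Rightarrow> 'a) \<Rightarrow> bool" where
  "left_semi_truss d c lam \<longleftrightarrow> is_semigroup d \<and> is_semigroup c \<and>
     (\<forall>a b x. c a (d b x) = d (c a b) (lam a x))"

end

theory Submission
  imports Defs
begin

locale invsg =
  fixes d :: "'a \<Rightarrow> 'a \<Rightarrow> 'a" (infixr "\<cdot>" 70)
  assumes inv: "inverse_semigroup d"
begin

abbreviation i where "i \<equiv> sg_inv d"

lemma assoc[simp]: "(a \<cdot> b) \<cdot> c = a \<cdot> b \<cdot> c"
  using inv unfolding inverse_semigroup_def is_semigroup_def by blast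

lemma ex1: "\<exists>!x. (a \<cdot> x) \<cdot> a = a \<and> (x \<cdot> a) \<cdot> x = x"
  using inv unfolding inverse_semigroup_def by blast

lemma invp: "(a \<cdot> i a) \<cdot> a = a \<and> (i a \<cdot> a) \<cdot> i a = i a"
  unfolding sg_inv_def by (rule theI', rule ex1)

lemma inv1[simp]: "a \<cdot> i a \<cdot> a = a" using invp by simp
lemma inv2[simp]: "i a \<cdot> a \<cdot> i a = i a" using invp by simp

lemma inv1'[simp]: "a \<cdot> i a \<cdot> a \<cdot> x = a \<cdot> x"
  by (metis assoc inv1)
lemma inv2'[simp]: "i a \<cdot> a \<cdot> i a \<cdot> x = i a \<cdot> x"
  by (metis assoc inv2)

lemma uniq: assumes "a \<cdot> x \<cdot> a = a" "x \<cdot> a \<cdot> x = x" shows "x = i a"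
proof -
  have p1: "(a \<cdot> x) \<cdot> a = a \<and> (x \<cdot> a) \<cdot> x = x" using assms by simp
  show ?thesis using ex1[of a] invp[of a] p1 by blast
qed

lemma idem_inv: assumes "e \<cdot> e = e" shows "i e = e"
  by (rule uniq[symmetric]) (simp_all add: assms)

lemma inv_inv[simp]: "i (i a) = a"
  by (rule uniq[symmetric]) simp_all

lemma idem3: "e \<cdot> e = e \<Longrightarrow> e \<cdot> e \<cdot> z = e \<cdot> z"
  by (metis assoc)

lemma idem_prod:
  assumes e: "e \<cdot> e = e" and f: "f \<cdot> f = f"
  shows "(e \<cdot> f) \<cdot> (e \<cdot> f) = e \<cdot> f"
proof -
  define x where "x = i (e \<cdot> f)"
  have x1: "e \<cdot> f \<cdot> x \<cdot> e \<cdot> f = e \<cdot> f"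
    using inv1[of "e \<cdot> f"] unfolding x_def by (simp only: assoc)
  have x2: "x \<cdot> e \<cdot> f \<cdot> x = x"
    using inv2[of "e \<cdot> f"] unfolding x_def by (simp only: assoc)
  have a: "(e \<cdot> f) \<cdot> (f \<cdot> x \<cdot> e) \<cdot> (e \<cdot> f) = e \<cdot> f"
    using e f x1 idem3[OF e] idem3[OF f] by simp
  have b: "(f \<cdot> x \<cdot> e) \<cdot> (e \<cdot> f) \<cdot> (f \<cdot> x \<cdot> e) = f \<cdot> x \<cdot> e"
  proof -
    have x2z: "x \<cdot> e \<cdot> f \<cdot> x \<cdot> z = x \<cdot> z" for z using x2 by (metis assoc)
    show ?thesis using e f x2z idem3[OF e] idem3[OF f] by simp
  qed
  have fxe: "f \<cdot> x \<cdot> e = x" using uniq[OF a b] x_def by simp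
  have xx: "x \<cdot> x = x"
  proof -
    have "x \<cdot> x = (f \<cdot> x \<cdot> e) \<cdot> (f \<cdot> x \<cdot> e)" using fxe by simp
    also have "\<dots> = f \<cdot> (x \<cdot> e \<cdot> f \<cdot> x) \<cdot> e" by simp
    also have "\<dots> = x" using x2 fxe by simp
    finally show ?thesis .
  qed
  have "i x = x" using idem_inv[OF xx] .
  moreover have "i x = e \<cdot> f" unfolding x_def by simp
  ultimately have "x = e \<cdot> f" by simp
  then show ?thesis using xx by simp
qed

lemma idem_comm:
  assumes e: "e \<cdot> e = e" and f: "f \<cdot> f = f"
  shows "e \<cdot> f = f \<cdot> e"
proof -
  have ef: "(e \<cdot> f) \<cdot> (e \<cdot> f) = e \<cdot> f" and fe: "(f \<cdot> e) \<cdot> (f \<cdot> e) = f \<cdot> e"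
    using idem_prod e f by auto
  have a: "(e \<cdot> f) \<cdot> (f \<cdot> e) \<cdot> (e \<cdot> f) = e \<cdot> f"
    using ef idem3[OF e] idem3[OF f] by simp
  have b: "(f \<cdot> e) \<cdot> (e \<cdot> f) \<cdot> (f \<cdot> e) = f \<cdot> e"
    using fe idem3[OF e] idem3[OF f] by simp
  have "f \<cdot> e = i (e \<cdot> f)" by (rule uniq[OF a b])
  also have "\<dots> = e \<cdot> f" using idem_inv[OF ef] .
  finally show ?thesis by simp
qed

lemma comm3: "e \<cdot> e = e \<Longrightarrow> f \<cdot> f = f \<Longrightarrow> e \<cdot> f \<cdot> z = f \<cdot> e \<cdot> z"
  by (metis assoc idem_comm)

lemma idem_rr: "(a \<cdot> i a) \<cdot> (a \<cdot> i a) = a \<cdot> i a" by simp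
lemma idem_ll: "(i a \<cdot> a) \<cdot> (i a \<cdot> a) = i a \<cdot> a" by simp

lemma inv_mult: "i (x \<cdot> y) = i y \<cdot> i x"
proof (rule uniq[symmetric])
  show "(x \<cdot> y) \<cdot> (i y \<cdot> i x) \<cdot> (x \<cdot> y) = x \<cdot> y"
    using comm3[OF idem_rr[of y] idem_ll[of x], where z=y] by simp
  show "(i y \<cdot> i x) \<cdot> (x \<cdot> y) \<cdot> (i y \<cdot> i x) = i y \<cdot> i x"
    using comm3[OF idem_ll[of x] idem_rr[of y], where z="i x"] by simp
qed

lemma compat:
  assumes h: "p \<cdot> i q \<cdot> q = q \<cdot> i p \<cdot> p"
  shows "(p \<cdot> i q) \<cdot> (p \<cdot> i q) = p \<cdot> i q"
proof -
  have "(p \<cdot> i q \<cdot> q) \<cdot> i q = (q \<cdot> i p \<cdot> p) \<cdot> i q" using h by (rule arg_cong)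
  then have e1: "p \<cdot> i q = q \<cdot> i p \<cdot> p \<cdot> i q" by simp
  have "(q \<cdot> i p \<cdot> p \<cdot> i q) \<cdot> (q \<cdot> i p \<cdot> p \<cdot> i q) = q \<cdot> i p \<cdot> p \<cdot> i q"
    using comm3[OF idem_ll[of p] idem_ll[of q], where z="i p \<cdot> p \<cdot> i q"] by simp
  then show ?thesis using e1 by simp
qed

lemma compat_eq:
  assumes h: "p \<cdot> i q \<cdot> q = q \<cdot> i p \<cdot> p"
  shows "p \<cdot> i q = q \<cdot> i p"
proof -
  have "i (p \<cdot> i q) = p \<cdot> i q" by (rule idem_inv[OF compat[OF h]])
  then show ?thesis by (simp add: inv_mult)
qed

end

locale trctx = invsg +
  fixes circ lam :: "'a \<Rightarrow> 'a \<Rightarrow> 'a" and \<sigma> :: "'a \<Rightarrow> 'a \<Rightarrow> 'a"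
  assumes truss: "left_semi_truss d circ lam"
    and sigma_def: "\<And>a b. \<sigma> a b = circ a (b \<cdot> i b)"
    and lam_eq: "\<And>a b. lam a b = i (\<sigma> a b) \<cdot> circ a b"
begin

lemma K: "circ a (x \<cdot> y) = circ a x \<cdot> i (\<sigma> a y) \<cdot> circ a y"
  using truss lam_eq unfolding left_semi_truss_def by simp

lemma S_idem: "e \<cdot> e = e \<Longrightarrow> \<sigma> a e = circ a e"
  using sigma_def idem_inv by simp

lemma S_rr: "\<sigma> a (x \<cdot> i x) = \<sigma> a x"
  using S_idem[OF idem_rr, of a x] sigma_def[of a x] by (simp only:)

lemma part1: "e \<cdot> e = e \<Longrightarrow> \<sigma> a (e \<cdot> b) = \<sigma> a e \<cdot> i (\<sigma> a b) \<cdot> \<sigma> a b"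
proof -
  assume e: "e \<cdot> e = e"
  have "(e \<cdot> b) \<cdot> i (e \<cdot> b) = e \<cdot> (b \<cdot> i b)"
  proof -
    have "(e \<cdot> b) \<cdot> i (e \<cdot> b) = e \<cdot> (b \<cdot> i b) \<cdot> e" using idem_inv[OF e] by (simp add: inv_mult)
    also have "\<dots> = e \<cdot> e \<cdot> (b \<cdot> i b)" using idem_comm[OF idem_rr e] by simp
    finally show ?thesis using e by (metis assoc)
  qed
  then have "\<sigma> a (e \<cdot> b) = circ a (e \<cdot> (b \<cdot> i b))" using sigma_def by simp
  also have "\<dots> = circ a e \<cdot> i (\<sigma> a (b \<cdot> i b)) \<cdot> circ a (b \<cdot> i b)" by (rule K)
  also have "\<dots> = \<sigma> a e \<cdot> i (\<sigma> a b) \<cdot> \<sigma> a b"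
    by (simp only: S_idem[OF e] S_rr sigma_def[of a b, symmetric])
  finally show ?thesis .
qed

lemma part2: "e \<cdot> e = e \<Longrightarrow> \<sigma> a (e \<cdot> b) = \<sigma> a b \<cdot> i (\<sigma> a e) \<cdot> \<sigma> a e"
proof -
  assume e: "e \<cdot> e = e"
  have "(e \<cdot> b) \<cdot> i (e \<cdot> b) = (b \<cdot> i b) \<cdot> e"
  proof -
    have "(e \<cdot> b) \<cdot> i (e \<cdot> b) = e \<cdot> (b \<cdot> i b) \<cdot> e" using idem_inv[OF e] by (simp add: inv_mult)
    also have "\<dots> = (b \<cdot> i b) \<cdot> e \<cdot> e" using idem_comm[OF idem_rr e] by (metis assoc)
    finally show ?thesis using e by (metis assoc)
  qed
  then have "\<sigma> a (e \<cdot> b) = circ a ((b \<cdot> i b) \<cdot> e)" using sigma_def by simp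
  also have "\<dots> = circ a (b \<cdot> i b) \<cdot> i (\<sigma> a e) \<cdot> circ a e" by (rule K)
  also have "\<dots> = \<sigma> a b \<cdot> i (\<sigma> a e) \<cdot> \<sigma> a e"
    by (simp only: S_idem[OF e] sigma_def[of a b, symmetric])
  finally show ?thesis .
qed

lemma key3: "\<sigma> a b \<cdot> i (\<sigma> a c) \<cdot> \<sigma> a c = \<sigma> a c \<cdot> i (\<sigma> a b) \<cdot> \<sigma> a b"
proof -
  have "circ a ((b \<cdot> i b) \<cdot> (c \<cdot> i c)) = \<sigma> a b \<cdot> i (\<sigma> a c) \<cdot> \<sigma> a c"
    using K[of a "b \<cdot> i b" "c \<cdot> i c"] by (simp only: S_rr sigma_def[of a b, symmetric] sigma_def[of a c, symmetric])
  moreover have "circ a ((c \<cdot> i c) \<cdot> (b \<cdot> i b)) = \<sigma> a c \<cdot> i (\<sigma> a b) \<cdot> \<sigma> a b"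
    using K[of a "c \<cdot> i c" "b \<cdot> i b"] by (simp only: S_rr sigma_def[of a b, symmetric] sigma_def[of a c, symmetric])
  moreover have "(b \<cdot> i b) \<cdot> (c \<cdot> i c) = (c \<cdot> i c) \<cdot> (b \<cdot> i b)"
    using idem_comm[OF idem_rr idem_rr] by simp
  ultimately show ?thesis by simp
qed

lemma Lx: "circ a x \<cdot> i (circ a x) \<cdot> \<sigma> a x = \<sigma> a x"
proof -
  have s: "\<sigma> a x = circ a x \<cdot> i (\<sigma> a (i x)) \<cdot> circ a (i x)"
    unfolding sigma_def[of a x] by (rule K)
  show ?thesis by (simp add: s)
qed

lemma Lx': "i (\<sigma> a x) \<cdot> circ a x \<cdot> i (circ a x) = i (\<sigma> a x)"
proof -
  let ?s = "\<sigma> a x" and ?g = "circ a x \<cdot> i (circ a x)"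
  have "?s \<cdot> i ?s \<cdot> ?g = ?g \<cdot> ?s \<cdot> i ?s" using idem_comm[OF idem_rr idem_rr] by (metis assoc)
  also have "\<dots> = ?s \<cdot> i ?s" using Lx by (metis assoc)
  finally have h: "?s \<cdot> i ?s \<cdot> ?g = ?s \<cdot> i ?s" .
  have "i ?s \<cdot> ?g = i ?s \<cdot> ?s \<cdot> i ?s \<cdot> ?g" by simp
  also have "\<dots> = i ?s \<cdot> ?s \<cdot> i ?s" using h by (metis assoc)
  finally show ?thesis by simp
qed

lemma Mx: "\<sigma> a (i x) \<cdot> i (circ a x) \<cdot> circ a x = \<sigma> a (i x)"
proof -
  have s: "\<sigma> a (i x) = circ a (i x) \<cdot> i (\<sigma> a x) \<cdot> circ a x"
    unfolding sigma_def[of a "i x"] inv_inv by (rule K)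
  show ?thesis by (simp add: s)
qed

lemma part5: "\<sigma> a (i b) \<cdot> i (circ a b) = circ a (i b) \<cdot> i (\<sigma> a b)"
proof -
  have s: "\<sigma> a (i b) = circ a (i b) \<cdot> i (\<sigma> a b) \<cdot> circ a b"
    unfolding sigma_def[of a "i b"] inv_inv by (rule K)
  have "\<sigma> a (i b) \<cdot> i (circ a b) = circ a (i b) \<cdot> (i (\<sigma> a b) \<cdot> circ a b \<cdot> i (circ a b))"
    by (subst s) simp
  also have "\<dots> = circ a (i b) \<cdot> i (\<sigma> a b)" using Lx' by simp
  finally show ?thesis .
qed

lemma part6: "i (circ a b) \<cdot> \<sigma> a b = i (\<sigma> a (i b)) \<cdot> circ a (i b)"
proof -
  have s: "\<sigma> a b = circ a b \<cdot> i (\<sigma> a (i b)) \<cdot> circ a (i b)"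
    unfolding sigma_def[of a b] by (rule K)
  have m: "i (circ a b) \<cdot> circ a b \<cdot> i (\<sigma> a (i b)) = i (\<sigma> a (i b))"
  proof -
    have "i (\<sigma> a (i b) \<cdot> i (circ a b) \<cdot> circ a b) = i (\<sigma> a (i b))" using Mx by simp
    then show ?thesis by (simp add: inv_mult)
  qed
  have "i (circ a b) \<cdot> \<sigma> a b = (i (circ a b) \<cdot> circ a b \<cdot> i (\<sigma> a (i b))) \<cdot> circ a (i b)"
    by (subst s) simp
  also have "\<dots> = i (\<sigma> a (i b)) \<cdot> circ a (i b)" using m by simp
  finally show ?thesis .
qed

lemma part7: "lam a (i b) = i (lam a b)"
  using part6[of a b] lam_eq by (simp add: inv_mult)

lemma part8: "e \<cdot> e = e \<Longrightarrow> lam a (e \<cdot> b) = lam a e \<cdot> lam a b"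
proof -
  assume e: "e \<cdot> e = e"
  let ?g = "\<sigma> a e" and ?s = "\<sigma> a b"
  have fe: "circ a (e \<cdot> b) = ?g \<cdot> i ?s \<cdot> circ a b" using K S_idem[OF e] by simp
  have se: "i (\<sigma> a (e \<cdot> b)) = i ?s \<cdot> ?s \<cdot> i ?g" using part1[OF e] by (simp add: inv_mult)
  have "lam a (e \<cdot> b) = (i ?s \<cdot> ?s) \<cdot> (i ?g \<cdot> ?g) \<cdot> i ?s \<cdot> circ a b"
    using lam_eq se fe by simp
  also have "\<dots> = (i ?g \<cdot> ?g) \<cdot> (i ?s \<cdot> ?s) \<cdot> i ?s \<cdot> circ a b"
    using idem_comm[OF idem_ll idem_ll] by (metis assoc)
  also have "\<dots> = (i ?g \<cdot> ?g) \<cdot> i ?s \<cdot> circ a b" by simp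
  also have "\<dots> = lam a e \<cdot> lam a b" using lam_eq S_idem[OF e] by simp
  finally show ?thesis .
qed

end

theorem proposition3p4:
  fixes d circ lam :: "'a \<Rightarrow> 'a \<Rightarrow> 'a" and \<sigma> :: "'a \<Rightarrow> 'a \<Rightarrow> 'a"
  assumes truss: "left_semi_truss d circ lam"
    and inv: "inverse_semigroup d"
    and sigma_def: "\<And>a b. \<sigma> a b = circ a (d b (sg_inv d b))"
    and lam_eq: "\<And>a b. lam a b = d (sg_inv d (\<sigma> a b)) (circ a b)"
  shows "\<forall>a b c. \<forall>e \<in> idempotents d.
     \<sigma> a (d e b) = d (d (\<sigma> a e) (sg_inv d (\<sigma> a b))) (\<sigma> a b)
   \<and> \<sigma> a (d e b) = d (d (\<sigma> a b) (sg_inv d (\<sigma> a e))) (\<sigma> a e)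
   \<and> d (\<sigma> a b) (sg_inv d (\<sigma> a c)) \<in> idempotents d
   \<and> d (\<sigma> a c) (sg_inv d (\<sigma> a b)) \<in> idempotents d
   \<and> d (\<sigma> a b) (sg_inv d (\<sigma> a c)) = d (\<sigma> a c) (sg_inv d (\<sigma> a b))
   \<and> left_compatible d (\<sigma> a b) (\<sigma> a c)
   \<and> d (\<sigma> a (sg_inv d b)) (sg_inv d (circ a b)) = d (circ a (sg_inv d b)) (sg_inv d (\<sigma> a b))
   \<and> d (sg_inv d (circ a b)) (\<sigma> a b) = d (sg_inv d (\<sigma> a (sg_inv d b))) (circ a (sg_inv d b))
   \<and> lam a (sg_inv d b) = sg_inv d (lam a b)
   \<and> lam a (d e b) = d (lam a e) (lam a b)"
proof -
  interpret trctx d circ lam \<sigma>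
    using truss inv sigma_def lam_eq by unfold_locales auto
  show ?thesis
  proof (intro allI ballI)
    fix a b c e assume "e \<in> idempotents d"
    then have e: "d e e = e" unfolding idempotents_def by simp
    have k1: "d (\<sigma> a b) (sg_inv d (\<sigma> a c)) \<in> idempotents d"
      using compat[OF key3] unfolding idempotents_def by simp
    have k2: "d (\<sigma> a c) (sg_inv d (\<sigma> a b)) \<in> idempotents d"
      using compat[OF key3] unfolding idempotents_def by simp
    show "\<sigma> a (d e b) = d (d (\<sigma> a e) (sg_inv d (\<sigma> a b))) (\<sigma> a b)
   \<and> \<sigma> a (d e b) = d (d (\<sigma> a b) (sg_inv d (\<sigma> a e))) (\<sigma> a e)
   \<and> d (\<sigma> a b) (sg_inv d (\<sigma> a c)) \<in> idempotents d
   \<and> d (\<sigma> a c) (sg_inv d (\<sigma> a b)) \<in> idempotents d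
   \<and> d (\<sigma> a b) (sg_inv d (\<sigma> a c)) = d (\<sigma> a c) (sg_inv d (\<sigma> a b))
   \<and> left_compatible d (\<sigma> a b) (\<sigma> a c)
   \<and> d (\<sigma> a (sg_inv d b)) (sg_inv d (circ a b)) = d (circ a (sg_inv d b)) (sg_inv d (\<sigma> a b))
   \<and> d (sg_inv d (circ a b)) (\<sigma> a b) = d (sg_inv d (\<sigma> a (sg_inv d b))) (circ a (sg_inv d b))
   \<and> lam a (sg_inv d b) = sg_inv d (lam a b)
   \<and> lam a (d e b) = d (lam a e) (lam a b)"
      unfolding left_compatible_def
      apply (intro conjI)
      apply (simp only: assoc part1[OF e])
      apply (simp only: assoc part2[OF e])
      apply (rule k1)
      apply (rule k2)
      apply (rule compat_eq[OF key3])
      apply (rule k1)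
      apply (rule part5)
      apply (rule part6)
      apply (rule part7)
      apply (rule part8[OF e])
      done
  qed
qed

end
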